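(* For positive integers $p,q,r,s,t,u$, the transition maps satisfy: (1) $T^{p,q,r}_{s,t,u}:\Lambda^{p,q,r}\to\Lambda^{s,t,u}$ is well-defined; (2) $T^{p,q,r}_{s,t,u}$ is order-preserving; (3) $T^{s,t,u}_{p,q,r}\circ T^{p,q,r}_{s,t,u}\le\mathrm{id}_{\Lambda^{p,q,r}}$ (pointwise); (4) $T^{s,t,u}_{p,q,r}\circ T^{p,q,r}_{s,t,u}=\mathrm{id}_{\Lambda^{p,q,r}}$ if $p\le s$, $q\le t$ and $r\le u$; (5) $(T^{p,q,r}_{s,t,u})^{-1}(0)=\{0\}$ if each of the pairs $(p,s),(q,t),(r,u)$ lies in $\{(1,1)\}\cup(\mathbb{N}_{\ge2})^2$.
   Context: $\mathbb{N}=\{0,1,2,\dots\}$. For positive integers $p,q,r$, $\Lambda^{p,q,r}=\langle a,b,c\mid pa+qb=rc\rangle$ is the quotient of the free commutative monoid $\mathbb{N}a\oplus\mathbb{N}b\oplus\mathbb{N}c$ by the congruence generated by $\lambda+pa+qb\sim\lambda+rc$; it is ordered by $\lambda\le\mu$ iff $\lambda+\nu=\mu$ for some $\nu\in\Lambda^{p,q,r}$. The transition function $\tau^p_q:\mathbb{N}\to\mathbb{N}$ is $\tau^p_q(mp+n)=mq+\min\{n,q-1\}$ ($m\in\mathbb{N}$, $0\le n<p$). The transition map $T^{p,q,r}_{s,t,u}:\Lambda^{p,q,r}\to\Lambda^{s,t,u}$ is $T^{p,q,r}_{s,t,u}(ma+nb+kc)=\tau^p_s(m)a+\tau^q_t(n)b+\tau^r_u(k)c$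 for $m,n,k\in\mathbb{N}$. For maps $f,g$ into a poset, $f\le g$ means $f(x)\le g(x)$ for all $x$. *)

theory Defs
  imports Main
begin

text \<open>Elements of the free commutative monoid Na + Nb + Nc are represented by
  triples (m, n, k) of naturals, standing for m a + n b + k c.  The monoid
  Lambda^{p,q,r} is the quotient of this free monoid by the congruence lam_eq p q r;
  we work with representatives and the congruence explicitly.\<close>

type_synonym triple = "nat \<times> nat \<times> nat"

definition add3 :: "triple \<Rightarrow> triple \<Rightarrow> triple" where
  "add3 x y = (fst x + fst y, fst (snd x) + fst (snd y), snd (snd x) + snd (snd y))"

definition lam_step :: "nat \<Rightarrow> nat \<Rightarrow> nat \<Rightarrow> triple rel" where
  "lam_step p q r = {(add3 l (p, q, 0), add3 l (0, 0, r)) | l. True}"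

text \<open>The congruence generated: reflexive-symmetric-transitive closure
  (the generating relation is already translation invariant).\<close>
definition lam_eq :: "nat \<Rightarrow> nat \<Rightarrow> nat \<Rightarrow> triple \<Rightarrow> triple \<Rightarrow> bool" where
  "lam_eq p q r x y \<longleftrightarrow> (x, y) \<in> (lam_step p q r \<union> (lam_step p q r)\<inverse>)\<^sup>*"

definition lam_le :: "nat \<Rightarrow> nat \<Rightarrow> nat \<Rightarrow> triple \<Rightarrow> triple \<Rightarrow> bool" where
  "lam_le p q r x y \<longleftrightarrow> (\<exists>v. lam_eq p q r (add3 x v) y)"

definition tau :: "nat \<Rightarrow> nat \<Rightarrow> nat \<Rightarrow> nat" where
  "tau p q x = (x div p) * q + min (x mod p) (q - 1)"

definition trans_map :: "nat \<Rightarrow> nat \<Rightarrow> nat \<Rightarrow> nat \<Rightarrow> nat \<Rightarrow> nat \<Rightarrow> triple \<Rightarrow> triple" where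
  "trans_map p q r s t u x =
     (tau p s (fst x), tau q t (fst (snd x)), tau r u (snd (snd x)))"

definition good_pair :: "nat \<Rightarrow> nat \<Rightarrow> bool" where
  "good_pair p s \<longleftrightarrow> (p = 1 \<and> s = 1) \<or> (2 \<le> p \<and> 2 \<le> s)"

end

theory Submission
  imports Defs
begin

lemma divp: "0 < (r::nat) \<Longrightarrow> (b + r) div r = b div r + 1"
  using div_add_self2[of r b] by simp

lemma tau_add: "0 < p \<Longrightarrow> tau p s (x + p) = tau p s x + s"
proof -
  assume "0 < p"
  then have "(x + p) div p = x div p + 1" "(x + p) mod p = x mod p" by (simp_all add: divp)
  then show ?thesis by (simp add: tau_def algebra_simps)
qed

lemma tau_mono:
  assumes "0 < p" "0 < s" "x \<le> y"
  shows "tau p s x \<le> tau p s y"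
proof -
  have d: "x div p \<le> y div p" using assms by (simp add: div_le_mono)
  show ?thesis
  proof (cases "x div p = y div p")
    case True
    have "x mod p \<le> y mod p"
      by (metis True assms(3) diff_le_mono minus_div_mult_eq_mod)
    then show ?thesis using True by (simp add: tau_def)
  next
    case False
    then have "x div p + 1 \<le> y div p" using d by simp
    then have "(x div p + 1) * s \<le> (y div p) * s" by (rule mult_right_mono) simp
    moreover have "tau p s x \<le> (x div p) * s + (s - 1)" by (simp add: tau_def)
    moreover have "(y div p) * s \<le> tau p s y" by (simp add: tau_def)
    ultimately show ?thesis using assms(2) by (simp add: algebra_simps)
  qed
qed

lemma tau_back: "0 < p \<Longrightarrow> 0 < s \<Longrightarrow> tau s p (tau p s x) \<le> x"
proof -
  assume "0 < p" "0 < s"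
  have m: "min (x mod p) (s - 1) < s" using \<open>0 < s\<close> by simp
  have "tau s p (tau p s x) = (x div p) * p + min (min (x mod p) (s - 1)) (p - 1)"
    unfolding tau_def [of s p] using m
    by (simp add: tau_def div_add1_eq[of "(x div p) * s"] mod_add_left_eq[symmetric])
  also have "\<dots> \<le> (x div p) * p + x mod p" by (rule add_left_mono) simp
  also have "\<dots> = x" by simp
  finally show ?thesis .
qed

lemma tau_id: "0 < p \<Longrightarrow> p \<le> s \<Longrightarrow> tau s p (tau p s x) = x"
proof -
  assume a: "0 < p" "p \<le> s"
  have m: "x mod p < p" using a by simp
  then have e: "min (x mod p) (s - 1) = x mod p" using a m by simp
  have "tau s p (tau p s x) = (x div p) * p + min (min (x mod p) (s - 1)) (p - 1)"
    unfolding tau_def [of s p] using m a e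
    by (simp add: tau_def)
  also have "\<dots> = x" using e m by simp
  finally show ?thesis .
qed

lemma tau_zero: "0 < p \<Longrightarrow> 0 < s \<Longrightarrow> good_pair p s \<Longrightarrow> tau p s x = 0 \<Longrightarrow> x = 0"
  unfolding good_pair_def tau_def
  by (auto simp: min_def split: if_splits)

definition nf :: "nat \<Rightarrow> nat \<Rightarrow> nat \<Rightarrow> triple \<Rightarrow> triple" where
  "nf p q r x = (fst x + (snd (snd x) div r) * p, fst (snd x) + (snd (snd x) div r) * q,
                 snd (snd x) mod r)"

lemma lam_eq_nf:
  assumes "0 < r" "lam_eq p q r x y"
  shows "nf p q r x = nf p q r y"
proof -
  have "(x, y) \<in> (lam_step p q r \<union> (lam_step p q r)\<inverse>)\<^sup>*" using assms(2) by (simp add: lam_eq_def)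
  then show ?thesis
  proof (induction rule: rtrancl_induct)
    case base then show ?case by simp
  next
    case (step y z)
    have "nf p q r y = nf p q r z"
      using step(2) assms(1) by (auto simp: lam_step_def add3_def nf_def algebra_simps divp)
    then show ?case using step by simp
  qed
qed

lemma lam_eq_zero:
  assumes "0 < p" "0 < r" "lam_eq p q r x (0,0,0)"
  shows "x = (0,0,0)"
proof -
  obtain a b c where x: "x = (a, b, c)" by (cases x) blast
  have "nf p q r x = nf p q r (0,0,0)" using lam_eq_nf[OF assms(2,3)] .
  then have h: "a + (c div r) * p = 0" "b + (c div r) * q = 0" "c mod r = 0"
    by (simp_all add: nf_def x)
  then have "c div r = 0" using assms(1) by simp
  then have "c = 0" using h(3) div_mult_mod_eq[of c r] by simp
  then show ?thesis using h x by simp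
qed

lemma lam_eq_refl: "lam_eq p q r x x" by (simp add: lam_eq_def)

lemma T_step1: "0 < p \<Longrightarrow> 0 < q \<Longrightarrow> trans_map p q r s t u (add3 l (p, q, 0)) = add3 (trans_map p q r s t u l) (s, t, 0)"
  using tau_add[of p s] tau_add[of q t]
  by (simp add: trans_map_def add3_def)

lemma T_step2: "0 < r \<Longrightarrow> trans_map p q r s t u (add3 l (0, 0, r)) = add3 (trans_map p q r s t u l) (0, 0, u)"
  using tau_add[of r u]
  by (simp add: trans_map_def add3_def)

lemma T_cong:
  assumes "0 < p" "0 < q" "0 < r" "lam_eq p q r x y"
  shows "lam_eq s t u (trans_map p q r s t u x) (trans_map p q r s t u y)"
proof -
  have "(x, y) \<in> (lam_step p q r \<union> (lam_step p q r)\<inverse>)\<^sup>*" using assms(4) by (simp add: lam_eq_def)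
  then show ?thesis
  proof (induction rule: rtrancl_induct)
    case base then show ?case by (simp add: lam_eq_refl)
  next
    case (step y z)
    have key: "(trans_map p q r s t u a, trans_map p q r s t u b) \<in> lam_step s t u"
      if "(a, b) \<in> lam_step p q r" for a b
    proof -
      from that obtain l where ab: "a = add3 l (p, q, 0)" "b = add3 l (0, 0, r)"
        unfolding lam_step_def by blast
      have "(add3 (trans_map p q r s t u l) (s, t, 0), add3 (trans_map p q r s t u l) (0, 0, u)) \<in> lam_step s t u"
        unfolding lam_step_def by blast
      then show ?thesis using ab by (simp add: T_step1 T_step2 assms)
    qed
    have "(trans_map p q r s t u y, trans_map p q r s t u z) \<in> lam_step s t u \<union> (lam_step s t u)\<inverse>"
      using step(2) key by blast
    then show ?case using step(3) unfolding lam_eq_def by (rule rtrancl_into_rtrancl[rotated])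
  qed
qed

lemma lam_le_of_le:
  assumes "fst x \<le> fst y" "fst (snd x) \<le> fst (snd y)" "snd (snd x) \<le> snd (snd y)"
  shows "lam_le p q r x y"
proof -
  have "add3 x (fst y - fst x, fst (snd y) - fst (snd x), snd (snd y) - snd (snd x)) = y"
    using assms by (cases x; cases y) (simp add: add3_def)
  then show ?thesis unfolding lam_le_def by (metis lam_eq_refl)
qed

theorem proposition3p3:
  fixes p q r s t u :: nat
  assumes "0 < p" "0 < q" "0 < r" "0 < s" "0 < t" "0 < u"
  shows
    "(\<forall>x y. lam_eq p q r x y \<longrightarrow>
        lam_eq s t u (trans_map p q r s t u x) (trans_map p q r s t u y))
     \<and> (\<forall>x y. lam_le p q r x y \<longrightarrow>
        lam_le s t u (trans_map p q r s t u x) (trans_map p q r s t u y))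
     \<and> (\<forall>x. lam_le p q r (trans_map s t u p q r (trans_map p q r s t u x)) x)
     \<and> (p \<le> s \<and> q \<le> t \<and> r \<le> u \<longrightarrow>
        (\<forall>x. lam_eq p q r (trans_map s t u p q r (trans_map p q r s t u x)) x))
     \<and> (good_pair p s \<and> good_pair q t \<and> good_pair r u \<longrightarrow>
        (\<forall>x. lam_eq s t u (trans_map p q r s t u x) (0, 0, 0) \<longleftrightarrow> lam_eq p q r x (0, 0, 0)))"
proof (intro conjI allI impI)
  fix x y assume "lam_eq p q r x y"
  then show "lam_eq s t u (trans_map p q r s t u x) (trans_map p q r s t u y)"
    using T_cong assms by blast
next
  fix x y assume "lam_le p q r x y"
  then obtain v where v: "lam_eq p q r (add3 x v) y" unfolding lam_le_def by blast
  have c: "lam_eq s t u (trans_map p q r s t u (add3 x v)) (trans_map p q r s t u y)"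
    using T_cong[OF assms(1-3) v] .
  have le: "lam_le s t u (trans_map p q r s t u x) (trans_map p q r s t u (add3 x v))"
    by (rule lam_le_of_le)
       (simp_all add: trans_map_def add3_def tau_mono assms)
  from le obtain w where w: "lam_eq s t u (add3 (trans_map p q r s t u x) w) (trans_map p q r s t u (add3 x v))"
    unfolding lam_le_def by blast
  have "lam_eq s t u (add3 (trans_map p q r s t u x) w) (trans_map p q r s t u y)"
    using w c unfolding lam_eq_def by (rule rtrancl_trans)
  then show "lam_le s t u (trans_map p q r s t u x) (trans_map p q r s t u y)"
    unfolding lam_le_def by blast
next
  fix x
  show "lam_le p q r (trans_map s t u p q r (trans_map p q r s t u x)) x"
    by (rule lam_le_of_le) (simp_all add: trans_map_def tau_back assms)
next
  fix x assume "p \<le> s \<and> q \<le> t \<and> r \<le> u"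
  then have "trans_map s t u p q r (trans_map p q r s t u x) = x"
    using assms by (cases x) (simp add: trans_map_def tau_id)
  then show "lam_eq p q r (trans_map s t u p q r (trans_map p q r s t u x)) x"
    by (simp add: lam_eq_refl)
next
  fix x assume g: "good_pair p s \<and> good_pair q t \<and> good_pair r u"
  show "lam_eq s t u (trans_map p q r s t u x) (0, 0, 0) \<longleftrightarrow> lam_eq p q r x (0, 0, 0)"
  proof
    assume "lam_eq s t u (trans_map p q r s t u x) (0, 0, 0)"
    then have "trans_map p q r s t u x = (0,0,0)" using lam_eq_zero assms by blast
    moreover obtain a b c where x: "x = (a, b, c)" by (cases x) blast
    ultimately have "tau p s a = 0" "tau q t b = 0" "tau r u c = 0"
      by (simp_all add: trans_map_def)
    then have "a = 0" "b = 0" "c = 0"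
      using g assms tau_zero[of p s a] tau_zero[of q t b] tau_zero[of r u c] by simp_all
    then have "x = (0,0,0)" using x by simp
    then show "lam_eq p q r x (0, 0, 0)" by (simp add: lam_eq_refl)
  next
    assume "lam_eq p q r x (0, 0, 0)"
    then have "x = (0,0,0)" using lam_eq_zero assms by blast
    then show "lam_eq s t u (trans_map p q r s t u x) (0, 0, 0)"
      by (simp add: trans_map_def tau_def lam_eq_refl)
  qed
qed

end
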